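(* Let $\mathfrak g$ be a Lie algebra, $(\mathfrak k,\pi)$ a $\mathfrak g$-Lie algebra (write $\xi\cdot x=\pi(\xi)x$), $r_\pm:\mathfrak k\to\mathfrak g$ linear maps, $\lambda,\nu,\kappa,\mu\in\mathbb R$, and put $r=(r_++r_-)/2$, $\beta=(r_+-r_-)/2$. (i) If $r$ is an extended $\mathcal O$-operator of weight $\lambda$ with extension $\beta$ of mass $(\nu,\kappa,\mu)$ with $\nu\neq0$, then $[x,y]_R:=r_+(x)\cdot y-r_-(y)\cdot x+\lambda[x,y]_{\mathfrak k}$ defines a Lie bracket on $\mathfrak k$. (ii) Suppose $\beta(\xi\cdot x)=[\xi,\beta(x)]_{\mathfrak g}$ for all $\xi\in\mathfrak g$, $x\in\mathfrak k$, and set $[x,y]'_R:=r(x)\cdot y-r(y)\cdot x+\lambda[x,y]_{\mathfrak k}$. Then, for each choice of sign, $r$ and $\beta$ satisfy $[r(x),r(y)]_{\mathfrak g}-r(r(x)\cdot y-r(y)\cdot x+\lambda[x,y]_{\mathfrak k})=-[\beta(x),\beta(y)]_{\mathfrak g}\pm\lambda\beta([x,y]_{\mathfrak k})$ for all $x,y$ if and only if $[r_\pm(x),r_\pm(y)]_{\mathfrak g}=r_\pm([x,y]'_R)$ for all $x,y\in\mathfrak k$.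
   Context: All spaces are finite-dimensional real. For a Lie algebra $\mathfrak g$, a $\mathfrak g$-Lie algebra $(\mathfrak k,\pi)$ is a Lie algebra $(\mathfrak k,[\,,\,]_{\mathfrak k})$ with a Lie algebra homomorphism $\pi:\mathfrak g\to\mathrm{Der}(\mathfrak k)$. For constants $\nu,\kappa,\mu$, a linear map $\beta:\mathfrak k\to\mathfrak g$ is: antisymmetric of mass $\nu$ if $\nu(\beta(x)\cdot y+\beta(y)\cdot x)=0$ for all $x,y\in\mathfrak k$; $\mathfrak g$-invariant of mass $\kappa$ if $\kappa\beta(\xi\cdot x)=\kappa[\xi,\beta(x)]_{\mathfrak g}$ for all $\xi\in\mathfrak g,x\in\mathfrak k$; equivalent of mass $\mu$ if $\mu\beta([x,y]_{\mathfrak k})\cdot z=\mu[\beta(x)\cdot y,z]_{\mathfrak k}$ for all $x,y,z\in\mathfrak k$. If $\beta$ has these three properties, a linear map $r:\mathfrak k\to\mathfrak g$ is an extended $\mathcal O$-operator of weight $\lambda$ with extension $\beta$ of mass $(\nu,\kappa,\mu)$ if $[r(x),r(y)]_{\mathfrak g}-r(r(x)\cdot y-r(y)\cdot x+\lambda[x,y]_{\mathfrak k})=\kappa[\beta(x),\beta(y)]_{\mathfrak g}+\mu\beta([x,y]_{\mathfrak k})$ for all $x,y\in\mathfrak k$. *)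

theory Defs
  imports "HOL-Analysis.Analysis"
begin

text \<open>Finite-dimensional real vector spaces are modelled by types of class euclidean_space.
  A Lie bracket on such a space: bilinear, alternating, Jacobi identity.\<close>

definition lie_bracket :: "('a::real_vector \<Rightarrow> 'a \<Rightarrow> 'a) \<Rightarrow> bool" where
  "lie_bracket br \<longleftrightarrow> bilinear br \<and> (\<forall>x. br x x = 0) \<and>
     (\<forall>x y z. br x (br y z) + br y (br z x) + br z (br x y) = 0)"

definition derivation :: "('a::real_vector \<Rightarrow> 'a \<Rightarrow> 'a) \<Rightarrow> ('a \<Rightarrow> 'a) \<Rightarrow> bool" where
  "derivation br D \<longleftrightarrow> linear D \<and> (\<forall>x y. D (br x y) = br (D x) y + br x (D y))"

definition g_lie_algebra ::
  "('g::real_vector \<Rightarrow> 'g \<Rightarrow> 'g) \<Rightarrow> ('k::real_vector \<Rightarrow> 'k \<Rightarrow> 'k) \<Rightarrow> ('g \<Rightarrow> 'k \<Rightarrow> 'k) \<Rightarrow> bool" where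
  "g_lie_algebra gbr kbr \<pi> \<longleftrightarrow> lie_bracket kbr \<and> (\<forall>x. linear (\<lambda>\<xi>. \<pi> \<xi> x)) \<and> (\<forall>\<xi>. derivation kbr (\<pi> \<xi>)) \<and>
     (\<forall>\<xi> \<eta> x. \<pi> (gbr \<xi> \<eta>) x = \<pi> \<xi> (\<pi> \<eta> x) - \<pi> \<eta> (\<pi> \<xi> x))"

definition antisym_mass ::
  "('g \<Rightarrow> 'k::real_vector \<Rightarrow> 'k) \<Rightarrow> ('k \<Rightarrow> 'g) \<Rightarrow> real \<Rightarrow> bool" where
  "antisym_mass \<pi> \<beta> \<nu> \<longleftrightarrow> (\<forall>x y. \<nu> *\<^sub>R (\<pi> (\<beta> x) y + \<pi> (\<beta> y) x) = 0)"

definition invariant_mass ::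
  "('g::real_vector \<Rightarrow> 'g \<Rightarrow> 'g) \<Rightarrow> ('g \<Rightarrow> 'k \<Rightarrow> 'k) \<Rightarrow> ('k \<Rightarrow> 'g) \<Rightarrow> real \<Rightarrow> bool" where
  "invariant_mass gbr \<pi> \<beta> \<kappa> \<longleftrightarrow> (\<forall>\<xi> x. \<kappa> *\<^sub>R \<beta> (\<pi> \<xi> x) = \<kappa> *\<^sub>R gbr \<xi> (\<beta> x))"

definition equiv_mass ::
  "('k::real_vector \<Rightarrow> 'k \<Rightarrow> 'k) \<Rightarrow> ('g \<Rightarrow> 'k \<Rightarrow> 'k) \<Rightarrow> ('k \<Rightarrow> 'g) \<Rightarrow> real \<Rightarrow> bool" where
  "equiv_mass kbr \<pi> \<beta> \<mu> \<longleftrightarrow>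
     (\<forall>x y z. \<mu> *\<^sub>R \<pi> (\<beta> (kbr x y)) z = \<mu> *\<^sub>R kbr (\<pi> (\<beta> x) y) z)"

definition ext_O_operator ::
  "('g::real_vector \<Rightarrow> 'g \<Rightarrow> 'g) \<Rightarrow> ('k::real_vector \<Rightarrow> 'k \<Rightarrow> 'k) \<Rightarrow> ('g \<Rightarrow> 'k \<Rightarrow> 'k) \<Rightarrow>
   real \<Rightarrow> ('k \<Rightarrow> 'g) \<Rightarrow> ('k \<Rightarrow> 'g) \<Rightarrow> real \<Rightarrow> real \<Rightarrow> real \<Rightarrow> bool" where
  "ext_O_operator gbr kbr \<pi> lam r \<beta> \<nu> \<kappa> \<mu> \<longleftrightarrow>
     linear r \<and> linear \<beta> \<and>
     antisym_mass \<pi> \<beta> \<nu> \<and> invariant_mass gbr \<pi> \<beta> \<kappa> \<and> equiv_mass kbr \<pi> \<beta> \<mu> \<and>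
     (\<forall>x y. gbr (r x) (r y) - r (\<pi> (r x) y - \<pi> (r y) x + lam *\<^sub>R kbr x y)
            = \<kappa> *\<^sub>R gbr (\<beta> x) (\<beta> y) + \<mu> *\<^sub>R \<beta> (kbr x y))"

end

theory Submission
  imports Defs
begin

lemma neg3: "(R::'a::ab_group_add) + P + Q = 0 \<Longrightarrow> -P + -Q + -R = 0"
  by (metis add.commute add.left_commute minus_add_distrib neg_equal_0_iff_equal)

lemma jac_aux:
  fixes gbr :: "'g::euclidean_space \<Rightarrow> 'g \<Rightarrow> 'g"
    and kbr :: "'k::euclidean_space \<Rightarrow> 'k \<Rightarrow> 'k"
    and \<pi> :: "'g \<Rightarrow> 'k \<Rightarrow> 'k"
    and r \<beta> :: "'k \<Rightarrow> 'g"
  assumes gl: "g_lie_algebra gbr kbr \<pi>"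
    and O: "ext_O_operator gbr kbr \<pi> lam r \<beta> \<nu> \<kappa> \<mu>" and nu: "\<nu> \<noteq> 0"
  defines "B \<equiv> (\<lambda>x y. \<pi> (r x) y - \<pi> (r y) x + lam *\<^sub>R kbr x y)"
  shows "B x (B y z) + B y (B z x) + B z (B x y) = 0"
proof -
  have lk: "lie_bracket kbr" and pl: "\<And>x. linear (\<lambda>\<xi>. \<pi> \<xi> x)"
    and der: "\<And>\<xi>. derivation kbr (\<pi> \<xi>)"
    and rep: "\<And>\<xi> \<eta> x. \<pi> (gbr \<xi> \<eta>) x = \<pi> \<xi> (\<pi> \<eta> x) - \<pi> \<eta> (\<pi> \<xi> x)"
    using gl unfolding g_lie_algebra_def by auto
  have bk: "bilinear kbr" and kal: "\<And>x. kbr x x = 0"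
    and kjac: "\<And>x y z. kbr x (kbr y z) + kbr y (kbr z x) + kbr z (kbr x y) = 0"
    using lk unfolding lie_bracket_def by auto
  have ksbb: "bounded_bilinear kbr" using bk bilinear_conv_bounded_bilinear by auto
  note ks = bounded_bilinear.add_left[OF ksbb] bounded_bilinear.add_right[OF ksbb] bounded_bilinear.diff_left[OF ksbb] bounded_bilinear.diff_right[OF ksbb] bounded_bilinear.minus_left[OF ksbb] bounded_bilinear.minus_right[OF ksbb] bounded_bilinear.scaleR_left[OF ksbb] bounded_bilinear.scaleR_right[OF ksbb] bounded_bilinear.zero_left[OF ksbb] bounded_bilinear.zero_right[OF ksbb]
  have pd: "\<And>\<xi> x y. \<pi> \<xi> (kbr x y) = kbr (\<pi> \<xi> x) y + kbr x (\<pi> \<xi> y)"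
    and pr: "\<And>\<xi>. linear (\<pi> \<xi>)" using der unfolding derivation_def by auto
  have lr: "linear r" and lb: "linear \<beta>" and an: "antisym_mass \<pi> \<beta> \<nu>"
    and inv: "invariant_mass gbr \<pi> \<beta> \<kappa>" and eqm: "equiv_mass kbr \<pi> \<beta> \<mu>"
    and Oeq: "\<And>x y. gbr (r x) (r y) - r (\<pi> (r x) y - \<pi> (r y) x + lam *\<^sub>R kbr x y)
            = \<kappa> *\<^sub>R gbr (\<beta> x) (\<beta> y) + \<mu> *\<^sub>R \<beta> (kbr x y)"
    using O unfolding ext_O_operator_def by auto
  have anti: "\<And>x y. \<pi> (\<beta> x) y = - \<pi> (\<beta> y) x"
    using an nu unfolding antisym_mass_def by (metis add_eq_0_iff scaleR_eq_0_iff)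
  have kanti: "\<And>a b. kbr a b = - kbr b a"
  proof -
    fix a b
    have "kbr (a+b) (a+b) = kbr a b + kbr b a" by (simp add: ks kal[of a] kal[of b])
    then have "kbr a b + kbr b a = 0" using kal[of "a+b"] by metis
    then show "kbr a b = - kbr b a" by (simp add: eq_neg_iff_add_eq_0)
  qed
  have p_add: "\<And>a b z. \<pi> (a+b) z = \<pi> a z + \<pi> b z" using linear_add[OF pl] by blast
  have p_diff: "\<And>a b z. \<pi> (a-b) z = \<pi> a z - \<pi> b z" using linear_diff[OF pl] by blast
  have p_scale: "\<And>c a z. \<pi> (c *\<^sub>R a) z = c *\<^sub>R \<pi> a z" using linear_cmul[OF pl] by blast
  have q_add: "\<And>a b \<xi>. \<pi> \<xi> (a+b) = \<pi> \<xi> a + \<pi> \<xi> b" using linear_add[OF pr] by blast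
  have q_diff: "\<And>a b \<xi>. \<pi> \<xi> (a-b) = \<pi> \<xi> a - \<pi> \<xi> b" using linear_diff[OF pr] by blast
  have q_scale: "\<And>c a \<xi>. \<pi> \<xi> (c *\<^sub>R a) = c *\<^sub>R \<pi> \<xi> a" using linear_cmul[OF pr] by blast
  have q_neg: "\<And>a \<xi>. \<pi> \<xi> (- a) = - \<pi> \<xi> a" using linear_neg[OF pr] by blast
  define Q where "Q x y z = \<mu> *\<^sub>R \<pi> (\<beta> (kbr x y)) z" for x y z
  have Qrel: "Q x y z = - Q z x y - Q y z x" for x y z
  proof -
    have "\<pi> (\<beta> (kbr x y)) z = - (kbr (\<pi> (\<beta> z) x) y + kbr (\<pi> (\<beta> y) z) x)"
      using anti[of "kbr x y" z] pd[of "\<beta> z" x y] kanti[of x "\<pi> (\<beta> y) z"] anti[of z y]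
      by (simp add: q_neg ks)
    hence "Q x y z = \<mu> *\<^sub>R (- (kbr (\<pi> (\<beta> z) x) y + kbr (\<pi> (\<beta> y) z) x))"
      by (simp add: Q_def)
    moreover have e: "\<And>a b c. Q a b c = \<mu> *\<^sub>R kbr (\<pi> (\<beta> a) b) c"
      using eqm unfolding equiv_mass_def Q_def by auto
    ultimately show ?thesis by (simp add: e algebra_simps eq_neg_iff_add_eq_0)
  qed
  have musum: "Q x y z + Q y z x + Q z x y = 0"
  proof -
    have "Q x y z + (Q z x y + Q y z x) = 0" using Qrel[of x y z] by simp
    then show ?thesis by (simp add: ac_simps)
  qed
  define T where "T a b c = \<pi> (\<beta> a) (\<pi> (\<beta> b) c)" for a b c
  have K1: "\<kappa> *\<^sub>R \<pi> (gbr (\<beta> a) (\<beta> b)) c = \<kappa> *\<^sub>R (T a b c + T b c a)" for a b c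
    unfolding T_def rep using anti[of a c] by (simp add: q_neg)
  have K2: "\<kappa> *\<^sub>R \<pi> (gbr (\<beta> a) (\<beta> b)) c = - \<kappa> *\<^sub>R T c a b" for a b c
  proof -
    have "\<kappa> *\<^sub>R gbr (\<beta> a) (\<beta> b) = \<kappa> *\<^sub>R \<beta> (\<pi> (\<beta> a) b)"
      using inv unfolding invariant_mass_def by auto
    hence "\<kappa> *\<^sub>R \<pi> (gbr (\<beta> a) (\<beta> b)) c = \<kappa> *\<^sub>R \<pi> (\<beta> (\<pi> (\<beta> a) b)) c"
      by (metis p_scale)
    also have "\<dots> = - \<kappa> *\<^sub>R T c a b" unfolding T_def using anti[of "\<pi> (\<beta> a) b" c] by simp
    finally show ?thesis .
  qed
  have kapsum: "\<kappa> *\<^sub>R \<pi> (gbr (\<beta> x) (\<beta> y)) z + \<kappa> *\<^sub>R \<pi> (gbr (\<beta> y) (\<beta> z)) x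
      + \<kappa> *\<^sub>R \<pi> (gbr (\<beta> z) (\<beta> x)) y = 0"
  proof -
    define U where "U = T x y z + T y z x + T z x y"
    have a: "\<kappa> *\<^sub>R \<pi> (gbr (\<beta> x) (\<beta> y)) z + \<kappa> *\<^sub>R \<pi> (gbr (\<beta> y) (\<beta> z)) x
      + \<kappa> *\<^sub>R \<pi> (gbr (\<beta> z) (\<beta> x)) y = \<kappa> *\<^sub>R U + \<kappa> *\<^sub>R U"
      unfolding K1 U_def by (simp add: algebra_simps)
    have b: "\<kappa> *\<^sub>R \<pi> (gbr (\<beta> x) (\<beta> y)) z + \<kappa> *\<^sub>R \<pi> (gbr (\<beta> y) (\<beta> z)) x
      + \<kappa> *\<^sub>R \<pi> (gbr (\<beta> z) (\<beta> x)) y = - \<kappa> *\<^sub>R U"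
      unfolding K2 U_def by (simp add: algebra_simps)
    from a b have "\<kappa> *\<^sub>R U + \<kappa> *\<^sub>R U = - (\<kappa> *\<^sub>R U)" by (metis scaleR_minus_left)
    hence c: "\<kappa> *\<^sub>R U + \<kappa> *\<^sub>R U + \<kappa> *\<^sub>R U = 0"
      by (simp only: eq_neg_iff_add_eq_0)
    hence "(\<kappa> + \<kappa> + \<kappa>) *\<^sub>R U = 0" using c by (simp only: scaleR_left_distrib)
    hence "\<kappa> *\<^sub>R U = 0" by auto
    with b show ?thesis by simp
  qed
  have rB: "r (B a b) = gbr (r a) (r b) - \<kappa> *\<^sub>R gbr (\<beta> a) (\<beta> b) - \<mu> *\<^sub>R \<beta> (kbr a b)" for a b
    using Oeq[of a b] unfolding B_def by (simp add: algebra_simps)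
  have E: "B (B a b) c = \<pi> (r a) (\<pi> (r b) c) - \<pi> (r b) (\<pi> (r a) c)
      - \<kappa> *\<^sub>R \<pi> (gbr (\<beta> a) (\<beta> b)) c - Q a b c
      - \<pi> (r c) (\<pi> (r a) b) + \<pi> (r c) (\<pi> (r b) a)
      - lam *\<^sub>R kbr (\<pi> (r c) a) b + lam *\<^sub>R kbr (\<pi> (r c) b) a
      + lam *\<^sub>R kbr (\<pi> (r a) b) c - lam *\<^sub>R kbr (\<pi> (r b) a) c
      + (lam*lam) *\<^sub>R kbr (kbr a b) c" for a b c
  proof -
    have Bapp: "\<And>u v. B u v = \<pi> (r u) v - \<pi> (r v) u + lam *\<^sub>R kbr u v" by (simp add: B_def)
    have "B (B a b) c = \<pi> (r (B a b)) c - \<pi> (r c) (B a b) + lam *\<^sub>R kbr (B a b) c" by (rule Bapp)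
    also have "\<dots> = \<pi> (r a) (\<pi> (r b) c) - \<pi> (r b) (\<pi> (r a) c)
      - \<kappa> *\<^sub>R \<pi> (gbr (\<beta> a) (\<beta> b)) c - Q a b c
      - \<pi> (r c) (\<pi> (r a) b) + \<pi> (r c) (\<pi> (r b) a)
      - lam *\<^sub>R kbr (\<pi> (r c) a) b + lam *\<^sub>R kbr (\<pi> (r c) b) a
      + lam *\<^sub>R kbr (\<pi> (r a) b) c - lam *\<^sub>R kbr (\<pi> (r b) a) c
      + (lam*lam) *\<^sub>R kbr (kbr a b) c"
      unfolding rB unfolding Bapp Q_def using kanti[of a "\<pi> (r c) b"]
      by (simp add: p_add p_diff p_scale q_add q_diff q_scale pd rep ks algebra_simps)
    finally show ?thesis .
  qed
  have h1: "B x (B y z) = - B (B y z) x"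
    unfolding B_def by (simp add: kanti[of x])
  have h2: "B y (B z x) = - B (B z x) y"
    unfolding B_def by (simp add: kanti[of y])
  have h3: "B z (B x y) = - B (B x y) z"
    unfolding B_def by (simp add: kanti[of z])
  have sum: "B (B x y) z + B (B y z) x + B (B z x) y = 0"
  proof -
    have j0: "- kbr (kbr y z) x + - kbr (kbr z x) y + - kbr (kbr x y) z = 0"
      using kjac[of x y z] unfolding kanti[of x "kbr y z"] kanti[of y "kbr z x"] kanti[of z "kbr x y"] .
    hence "kbr (kbr y z) x + kbr (kbr z x) y + kbr (kbr x y) z = 0"
      by (metis minus_add_distrib neg_equal_0_iff_equal)
    hence "kbr (kbr x y) z + kbr (kbr y z) x + kbr (kbr z x) y = 0" by (simp add: ac_simps)
    hence j: "(lam*lam) *\<^sub>R (kbr (kbr x y) z + kbr (kbr y z) x + kbr (kbr z x) y) = 0" by simp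
    show ?thesis unfolding E using musum kapsum j
      by (simp add: algebra_simps)
  qed
  show ?thesis unfolding h1 h2 h3 by (rule neg3[OF sum])
qed

theorem theorem2p13:
  fixes gbr :: "'g::euclidean_space \<Rightarrow> 'g \<Rightarrow> 'g"
    and kbr :: "'k::euclidean_space \<Rightarrow> 'k \<Rightarrow> 'k"
    and \<pi> :: "'g \<Rightarrow> 'k \<Rightarrow> 'k"
    and rp rm r \<beta> :: "'k \<Rightarrow> 'g"
    and lam \<nu> \<kappa> \<mu> :: real
  assumes "lie_bracket gbr"
    and "g_lie_algebra gbr kbr \<pi>"
    and "linear rp" and "linear rm"
    and "r = (\<lambda>x. (1/2) *\<^sub>R (rp x + rm x))"
    and "\<beta> = (\<lambda>x. (1/2) *\<^sub>R (rp x - rm x))"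
  shows "(ext_O_operator gbr kbr \<pi> lam r \<beta> \<nu> \<kappa> \<mu> \<and> \<nu> \<noteq> 0 \<longrightarrow>
            lie_bracket (\<lambda>x y. \<pi> (rp x) y - \<pi> (rm y) x + lam *\<^sub>R kbr x y))
       \<and> ((\<forall>\<xi> x. \<beta> (\<pi> \<xi> x) = gbr \<xi> (\<beta> x)) \<longrightarrow>
            ((\<forall>x y. gbr (r x) (r y) - r (\<pi> (r x) y - \<pi> (r y) x + lam *\<^sub>R kbr x y)
                    = - gbr (\<beta> x) (\<beta> y) + lam *\<^sub>R \<beta> (kbr x y))
             \<longleftrightarrow> (\<forall>x y. gbr (rp x) (rp y) = rp (\<pi> (r x) y - \<pi> (r y) x + lam *\<^sub>R kbr x y)))
          \<and> ((\<forall>x y. gbr (r x) (r y) - r (\<pi> (r x) y - \<pi> (r y) x + lam *\<^sub>R kbr x y)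
                    = - gbr (\<beta> x) (\<beta> y) - lam *\<^sub>R \<beta> (kbr x y))
             \<longleftrightarrow> (\<forall>x y. gbr (rm x) (rm y) = rm (\<pi> (r x) y - \<pi> (r y) x + lam *\<^sub>R kbr x y))))"
proof -
  have gl: "g_lie_algebra gbr kbr \<pi>" by fact
  have lk: "lie_bracket kbr" and pl: "\<And>x. linear (\<lambda>\<xi>. \<pi> \<xi> x)"
    and der: "\<And>\<xi>. derivation kbr (\<pi> \<xi>)"
    using gl unfolding g_lie_algebra_def by auto
  have bk: "bilinear kbr" and kal: "\<And>x. kbr x x = 0"
    using lk unfolding lie_bracket_def by auto
  have bg: "bilinear gbr" and gal: "\<And>x. gbr x x = 0"
    using assms(1) unfolding lie_bracket_def by auto
  have ksbb: "bounded_bilinear kbr" using bk bilinear_conv_bounded_bilinear by auto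
  note ks = bounded_bilinear.add_left[OF ksbb] bounded_bilinear.add_right[OF ksbb] bounded_bilinear.diff_left[OF ksbb] bounded_bilinear.diff_right[OF ksbb] bounded_bilinear.minus_left[OF ksbb] bounded_bilinear.minus_right[OF ksbb] bounded_bilinear.scaleR_left[OF ksbb] bounded_bilinear.scaleR_right[OF ksbb] bounded_bilinear.zero_left[OF ksbb] bounded_bilinear.zero_right[OF ksbb]
  have gsbb: "bounded_bilinear gbr" using bg bilinear_conv_bounded_bilinear by auto
  note gs = bounded_bilinear.add_left[OF gsbb] bounded_bilinear.add_right[OF gsbb] bounded_bilinear.diff_left[OF gsbb] bounded_bilinear.diff_right[OF gsbb] bounded_bilinear.minus_left[OF gsbb] bounded_bilinear.minus_right[OF gsbb] bounded_bilinear.scaleR_left[OF gsbb] bounded_bilinear.scaleR_right[OF gsbb] bounded_bilinear.zero_left[OF gsbb] bounded_bilinear.zero_right[OF gsbb]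
  have pr: "\<And>\<xi>. linear (\<pi> \<xi>)" using der unfolding derivation_def by auto
  have ganti: "\<And>a b. gbr a b = - gbr b a"
  proof -
    fix a b
    have "gbr (a+b) (a+b) = gbr a b + gbr b a" by (simp add: gs gal[of a] gal[of b])
    then have "gbr a b + gbr b a = 0" using gal[of "a+b"] by metis
    then show "gbr a b = - gbr b a" by (simp add: eq_neg_iff_add_eq_0)
  qed
  have p_add: "\<And>a b z. \<pi> (a+b) z = \<pi> a z + \<pi> b z" using linear_add[OF pl] by blast
  have p_diff: "\<And>a b z. \<pi> (a-b) z = \<pi> a z - \<pi> b z" using linear_diff[OF pl] by blast
  have p_scale: "\<And>c a z. \<pi> (c *\<^sub>R a) z = c *\<^sub>R \<pi> a z" using linear_cmul[OF pl] by blast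
  have rp_e: "\<And>x. rp x = r x + \<beta> x" and rm_e: "\<And>x. rm x = r x - \<beta> x"
    using assms(5,6) by (auto simp: algebra_simps simp flip: scaleR_add_right scaleR_diff_right)
  have lr: "linear r" unfolding assms(5)
    by (rule linearI) (simp_all add: linear_add[OF assms(3)] linear_add[OF assms(4)]
        linear_cmul[OF assms(3)] linear_cmul[OF assms(4)] algebra_simps)
  have lb: "linear \<beta>" unfolding assms(6)
    by (rule linearI) (simp_all add: linear_add[OF assms(3)] linear_add[OF assms(4)]
        linear_cmul[OF assms(3)] linear_cmul[OF assms(4)] algebra_simps)
  have P1: "lie_bracket (\<lambda>x y. \<pi> (rp x) y - \<pi> (rm y) x + lam *\<^sub>R kbr x y)"
    if O: "ext_O_operator gbr kbr \<pi> lam r \<beta> \<nu> \<kappa> \<mu>" and nu: "\<nu> \<noteq> 0"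
  proof -
    have an: "antisym_mass \<pi> \<beta> \<nu>" using O unfolding ext_O_operator_def by auto
    have anti: "\<And>x y. \<pi> (\<beta> x) y = - \<pi> (\<beta> y) x"
      using an nu unfolding antisym_mass_def by (metis add_eq_0_iff scaleR_eq_0_iff)
    define B where "B = (\<lambda>x y. \<pi> (r x) y - \<pi> (r y) x + lam *\<^sub>R kbr x y)"
    have eqB: "(\<lambda>x y. \<pi> (rp x) y - \<pi> (rm y) x + lam *\<^sub>R kbr x y) = B"
    proof (intro ext)
      fix x y
      show "\<pi> (rp x) y - \<pi> (rm y) x + lam *\<^sub>R kbr x y = B x y"
        unfolding B_def rp_e rm_e p_add p_diff using anti[of x y] by simp
    qed
    have bil: "bilinear B"
      unfolding bilinear_def B_def
      by (auto intro!: linearI simp: linear_add[OF lr] linear_cmul[OF lr] p_add p_scale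
          linear_add[OF pr] linear_cmul[OF pr] ks algebra_simps)
    have alt: "\<And>x. B x x = 0" unfolding B_def by (simp add: kal)
    have jac: "\<And>x y z. B x (B y z) + B y (B z x) + B z (B x y) = 0"
      unfolding B_def by (rule jac_aux[OF gl O nu])
    show ?thesis unfolding eqB lie_bracket_def using bil alt jac by blast
  qed
  have P2: "(gbr (r x) (r y) - r (\<pi> (r x) y - \<pi> (r y) x + lam *\<^sub>R kbr x y)
                    = - gbr (\<beta> x) (\<beta> y) + lam *\<^sub>R \<beta> (kbr x y))
             \<longleftrightarrow> gbr (rp x) (rp y) = rp (\<pi> (r x) y - \<pi> (r y) x + lam *\<^sub>R kbr x y)"
   and P3: "(gbr (r x) (r y) - r (\<pi> (r x) y - \<pi> (r y) x + lam *\<^sub>R kbr x y)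
                    = - gbr (\<beta> x) (\<beta> y) - lam *\<^sub>R \<beta> (kbr x y))
             \<longleftrightarrow> gbr (rm x) (rm y) = rm (\<pi> (r x) y - \<pi> (r y) x + lam *\<^sub>R kbr x y)"
    if inv: "\<forall>\<xi> x. \<beta> (\<pi> \<xi> x) = gbr \<xi> (\<beta> x)" for x y
  proof -
    define W where "W = \<pi> (r x) y - \<pi> (r y) x + lam *\<^sub>R kbr x y"
    define L where "L = gbr (r x) (r y) - r W"
    have bW: "\<beta> W = gbr (r x) (\<beta> y) + gbr (\<beta> x) (r y) + lam *\<^sub>R \<beta> (kbr x y)"
      unfolding W_def using inv ganti[of "r y" "\<beta> x"]
      by (simp add: linear_add[OF lb] linear_diff[OF lb] linear_cmul[OF lb])
    have ep: "gbr (rp x) (rp y) - rp W = L + gbr (\<beta> x) (\<beta> y) - lam *\<^sub>R \<beta> (kbr x y)"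
      unfolding rp_e L_def bW by (simp add: gs algebra_simps)
    have em: "gbr (rm x) (rm y) - rm W = L + gbr (\<beta> x) (\<beta> y) + lam *\<^sub>R \<beta> (kbr x y)"
      unfolding rm_e L_def bW by (simp add: gs algebra_simps)
    show "(gbr (r x) (r y) - r (\<pi> (r x) y - \<pi> (r y) x + lam *\<^sub>R kbr x y)
                    = - gbr (\<beta> x) (\<beta> y) + lam *\<^sub>R \<beta> (kbr x y))
             \<longleftrightarrow> gbr (rp x) (rp y) = rp (\<pi> (r x) y - \<pi> (r y) x + lam *\<^sub>R kbr x y)"
    proof -
      have "gbr (rp x) (rp y) = rp W \<longleftrightarrow> L + gbr (\<beta> x) (\<beta> y) - lam *\<^sub>R \<beta> (kbr x y) = 0" using ep by (metis eq_iff_diff_eq_0)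
      also have "\<dots> \<longleftrightarrow> L = - gbr (\<beta> x) (\<beta> y) + lam *\<^sub>R \<beta> (kbr x y)" by (auto simp: algebra_simps eq_neg_iff_add_eq_0)
      finally show ?thesis unfolding L_def W_def by blast
    qed
    show "(gbr (r x) (r y) - r (\<pi> (r x) y - \<pi> (r y) x + lam *\<^sub>R kbr x y)
                    = - gbr (\<beta> x) (\<beta> y) - lam *\<^sub>R \<beta> (kbr x y))
             \<longleftrightarrow> gbr (rm x) (rm y) = rm (\<pi> (r x) y - \<pi> (r y) x + lam *\<^sub>R kbr x y)"
    proof -
      have "gbr (rm x) (rm y) = rm W \<longleftrightarrow> L + gbr (\<beta> x) (\<beta> y) + lam *\<^sub>R \<beta> (kbr x y) = 0" using em by (metis eq_iff_diff_eq_0)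
      also have "\<dots> \<longleftrightarrow> L = - gbr (\<beta> x) (\<beta> y) - lam *\<^sub>R \<beta> (kbr x y)" by (auto simp: algebra_simps eq_neg_iff_add_eq_0)
      finally show ?thesis unfolding L_def W_def by blast
    qed
  qed
  show ?thesis using P1 P2 P3 by blast
qed

end
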